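(* Let $(H,\cdot,1,\Delta,\epsilon,S,\rightharpoonup)$ be a Yetter--Drinfeld post-Hopf algebra and let $P(H)=\{x\in H:\Delta(x)=x\otimes 1+1\otimes x\}$ be its space of primitive elements. Then $\rightharpoonup$ restricts to a linear map $P(H)\otimes P(H)\to P(H)$, and $(P(H),[\cdot,\cdot],\rightharpoonup)$ with $[x,y]=x\cdot y-y\cdot x$ is a post-Lie algebra.
   Context: Conventions: $\Bbbk$ is a field; algebras are associative unital, coalgebras coassociative counital; Sweedler notation $\Delta(c)=c_1\otimes c_2$ (summation omitted), iterated as $c_1\otimes c_2\otimes c_3$ etc.; $H\otimes H$ carries the tensor product coalgebra structure. Definition (Yetter--Drinfeld post-Hopf algebra). A tuple $(H,\cdot,1,\Delta,\epsilon,S,\rightharpoonup)$ where $(H,\cdot,1)$ is an algebra, $(H,\Delta,\epsilon)$ is a coalgebra on the same vector space, $S:H\to H$ is linear with $x_1\cdot S(x_2)=S(x_1)\cdot x_2=\epsilon(x)1$ for all $x$, and $\rightharpoonup:H\otimes H\to H$ is a coalgebra morphism, such that for all $x,y,z\in H$: (P1) $x\rightharpoonup(y\cdot z)=(x_1\rightharpoonup y)\cdot(x_2\rightharpoonup z)$; (P2) $x\rightharpoonup(y\rightharpoonup z)=\big(x_1\cdot(x_2\rightharpoonup y)\big)\rightharpoonup z$; (P3) the map $\alpha_\rightharpoonup:H\to\mathrm{End}(H)$, $\alpha_\rightharpoonup(x)(y)=x\rightharpoonup y$, is convolution invertible, i.e. there is $\beta_\rightharpoonup:H\to\mathrm{End}(H)$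 with $\alpha_\rightharpoonup(x_1)\circ\beta_\rightharpoonup(x_2)=\beta_\rightharpoonup(x_1)\circ\alpha_\rightharpoonup(x_2)=\epsilon(x)\mathrm{Id}_H$; (P4) $\epsilon(a\cdot b)=\epsilon(a)\epsilon(b)$, $\epsilon(1)=1_\Bbbk$, $\Delta(1)=1\otimes 1$; (P5) $\Delta(x\cdot y)=\Big(x_1\cdot\alpha_\rightharpoonup(x_2)\big(\beta_\rightharpoonup(x_4)(y_1)\big)\Big)\otimes(x_3\cdot y_2)$; (P6) setting $x\bullet_\rightharpoonup y:=x_1\cdot(x_2\rightharpoonup y)$, $S_\rightharpoonup(x):=\beta_\rightharpoonup(x_1)(S(x_2))$ and $x\leftharpoonup y:=\big(S_\rightharpoonup(x_1\rightharpoonup y_1)\bullet_\rightharpoonup x_2\big)\bullet_\rightharpoonup y_2$, one has $\Delta(S_\rightharpoonup(x))=S_\rightharpoonup(x_2)\otimes S_\rightharpoonup(x_1)$ and $(x_1\rightharpoonup y_1)\otimes(x_2\leftharpoonup y_2)=(x_2\rightharpoonup y_2)\otimes(x_1\leftharpoonup y_1)$. Definition (post-Lie algebra). A Lie algebra $(\mathfrak g,[\cdot,\cdot])$ with a linear map $\rightharpoonup:\mathfrak g\otimes\mathfrak g\to\mathfrak g$ such that for all $x,y,z$: $x\rightharpoonup[y,z]=[x\rightharpoonup y,z]+[y,x\rightharpoonup z]$ and $\big([x,y]+x\rightharpoonup y-y\rightharpoonup x\big)\rightharpoonup z=x\rightharpoonup(y\rightharpoonup z)-y\rightharpoonup(x\rightharpoonup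 z)$. *)

theory Defs
  imports Complex_Main
begin

text \<open>Since Isabelle/HOL has no tensor-product library, an element of H (x) H
(resp. H (x) H (x) H) is represented by a finite list of pairs (resp. triples)
of elements of H, read as the sum of the corresponding simple tensors.
Two such representatives denote the same tensor iff every bilinear
(resp. trilinear) form H x H -> k (resp. H x H x H -> k) takes the same
value on both; these forms are exactly the dual of H (x) H (resp. H (x) H (x) H),
which separates points over a field.
The coproduct Delta is a map delta :: 'v => ('v * 'v) list, and Sweedler sums
are sums over these lists.\<close>

definition lin :: "('k::field \<Rightarrow> 'v::ab_group_add \<Rightarrow> 'v) \<Rightarrow> ('k \<Rightarrow> 'w::ab_group_add \<Rightarrow> 'w) \<Rightarrow> ('v \<Rightarrow> 'w) \<Rightarrow> bool"
  where "lin sc sc' f \<longleftrightarrow> Vector_Spaces.linear sc sc' f"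

definition bilin :: "('k::field \<Rightarrow> 'v::ab_group_add \<Rightarrow> 'v) \<Rightarrow> ('k \<Rightarrow> 'w::ab_group_add \<Rightarrow> 'w) \<Rightarrow> ('v \<Rightarrow> 'v \<Rightarrow> 'w) \<Rightarrow> bool"
  where "bilin sc sc' f \<longleftrightarrow> (\<forall>y. lin sc sc' (\<lambda>x. f x y)) \<and> (\<forall>x. lin sc sc' (f x))"

definition trilin :: "('k::field \<Rightarrow> 'v::ab_group_add \<Rightarrow> 'v) \<Rightarrow> ('k \<Rightarrow> 'w::ab_group_add \<Rightarrow> 'w) \<Rightarrow> ('v \<Rightarrow> 'v \<Rightarrow> 'v \<Rightarrow> 'w) \<Rightarrow> bool"
  where "trilin sc sc' f \<longleftrightarrow> (\<forall>y z. lin sc sc' (\<lambda>x. f x y z)) \<and> (\<forall>x z. lin sc sc' (\<lambda>y. f x y z))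
                              \<and> (\<forall>x y. lin sc sc' (f x y))"

definition teq2 :: "('k::field \<Rightarrow> 'v::ab_group_add \<Rightarrow> 'v) \<Rightarrow> ('v \<times> 'v) list \<Rightarrow> ('v \<times> 'v) list \<Rightarrow> bool"
  where "teq2 sc L M \<longleftrightarrow> (\<forall>B. bilin sc ((*) :: 'k \<Rightarrow> 'k \<Rightarrow> 'k) B \<longrightarrow>
            sum_list (map (\<lambda>(a,b). B a b) L) = sum_list (map (\<lambda>(a,b). B a b) M))"

definition teq3 :: "('k::field \<Rightarrow> 'v::ab_group_add \<Rightarrow> 'v) \<Rightarrow> ('v \<times> 'v \<times> 'v) list \<Rightarrow> ('v \<times> 'v \<times> 'v) list \<Rightarrow> bool"
  where "teq3 sc L M \<longleftrightarrow> (\<forall>T. trilin sc ((*) :: 'k \<Rightarrow> 'k \<Rightarrow> 'k) T \<longrightarrow>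
            sum_list (map (\<lambda>(a,b,c). T a b c) L) = sum_list (map (\<lambda>(a,b,c). T a b c) M))"

definition delta3L :: "('v \<Rightarrow> ('v \<times> 'v) list) \<Rightarrow> 'v \<Rightarrow> ('v \<times> 'v \<times> 'v) list"
  where "delta3L delta x = [(a1, a2, b). (a, b) \<leftarrow> delta x, (a1, a2) \<leftarrow> delta a]"

definition delta3R :: "('v \<Rightarrow> ('v \<times> 'v) list) \<Rightarrow> 'v \<Rightarrow> ('v \<times> 'v \<times> 'v) list"
  where "delta3R delta x = [(a, b1, b2). (a, b) \<leftarrow> delta x, (b1, b2) \<leftarrow> delta b]"

definition delta4 :: "('v \<Rightarrow> ('v \<times> 'v) list) \<Rightarrow> 'v \<Rightarrow> ('v \<times> 'v \<times> 'v \<times> 'v) list"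
  where "delta4 delta x = [(a1, a2, a3, b). (a, b) \<leftarrow> delta x, (c, a3) \<leftarrow> delta a, (a1, a2) \<leftarrow> delta c]"

definition bullet :: "('v \<Rightarrow> 'v \<Rightarrow> 'v) \<Rightarrow> ('v \<Rightarrow> ('v \<times> 'v) list) \<Rightarrow> ('v \<Rightarrow> 'v \<Rightarrow> 'v) \<Rightarrow> 'v \<Rightarrow> 'v \<Rightarrow> 'v::ab_group_add"
  where "bullet mult delta act x y = sum_list [mult x1 (act x2 y). (x1, x2) \<leftarrow> delta x]"

definition Sact :: "('v \<Rightarrow> ('v \<times> 'v) list) \<Rightarrow> ('v \<Rightarrow> 'v \<Rightarrow> 'v) \<Rightarrow> ('v \<Rightarrow> 'v) \<Rightarrow> 'v \<Rightarrow> 'v::ab_group_add"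
  where "Sact delta beta S x = sum_list [beta x1 (S x2). (x1, x2) \<leftarrow> delta x]"

definition lharp :: "('v \<Rightarrow> 'v \<Rightarrow> 'v) \<Rightarrow> ('v \<Rightarrow> ('v \<times> 'v) list) \<Rightarrow> ('v \<Rightarrow> 'v) \<Rightarrow> ('v \<Rightarrow> 'v \<Rightarrow> 'v)
                     \<Rightarrow> ('v \<Rightarrow> 'v \<Rightarrow> 'v) \<Rightarrow> 'v \<Rightarrow> 'v \<Rightarrow> 'v::ab_group_add"
  where "lharp mult delta S act beta x y =
     sum_list [bullet mult delta act (bullet mult delta act (Sact delta beta S (act x1 y1)) x2) y2.
                 (x1, x2) \<leftarrow> delta x, (y1, y2) \<leftarrow> delta y]"

text \<open>Yetter--Drinfeld post-Hopf algebra (H, mult, one, delta, eps, S, act); beta is the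
convolution inverse of alpha_act (which is unique when it exists, so it is taken as a
parameter constrained by (P3)).\<close>
definition yd_post_hopf ::
  "('k::field \<Rightarrow> 'v::ab_group_add \<Rightarrow> 'v) \<Rightarrow> ('v \<Rightarrow> 'v \<Rightarrow> 'v) \<Rightarrow> 'v \<Rightarrow> ('v \<Rightarrow> ('v \<times> 'v) list)
    \<Rightarrow> ('v \<Rightarrow> 'k) \<Rightarrow> ('v \<Rightarrow> 'v) \<Rightarrow> ('v \<Rightarrow> 'v \<Rightarrow> 'v) \<Rightarrow> ('v \<Rightarrow> 'v \<Rightarrow> 'v) \<Rightarrow> bool"
  where "yd_post_hopf sc mult one delta eps S act beta \<longleftrightarrow>
    \<comment> \<open>vector space\<close>
    vector_space sc \<and>
    \<comment> \<open>associative unital algebra\<close>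
    bilin sc sc mult \<and>
    (\<forall>x y z. mult (mult x y) z = mult x (mult y z)) \<and>
    (\<forall>x. mult one x = x \<and> mult x one = x) \<and>
    \<comment> \<open>coassociative counital coalgebra; delta is linear H -> H (x) H\<close>
    (\<forall>c x y. teq2 sc (delta (sc c x + y)) (map (\<lambda>(a,b). (sc c a, b)) (delta x) @ delta y)) \<and>
    lin sc ((*) :: 'k \<Rightarrow> 'k \<Rightarrow> 'k) eps \<and>
    (\<forall>x. teq3 sc (delta3L delta x) (delta3R delta x)) \<and>
    (\<forall>x. sum_list [sc (eps x1) x2. (x1, x2) \<leftarrow> delta x] = x) \<and>
    (\<forall>x. sum_list [sc (eps x2) x1. (x1, x2) \<leftarrow> delta x] = x) \<and>
    \<comment> \<open>S\<close>
    lin sc sc S \<and>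
    (\<forall>x. sum_list [mult x1 (S x2). (x1, x2) \<leftarrow> delta x] = sc (eps x) one) \<and>
    (\<forall>x. sum_list [mult (S x1) x2. (x1, x2) \<leftarrow> delta x] = sc (eps x) one) \<and>
    \<comment> \<open>act is a coalgebra morphism H (x) H -> H\<close>
    bilin sc sc act \<and>
    (\<forall>x y. teq2 sc (delta (act x y)) [(act x1 y1, act x2 y2). (x1, x2) \<leftarrow> delta x, (y1, y2) \<leftarrow> delta y]) \<and>
    (\<forall>x y. eps (act x y) = eps x * eps y) \<and>
    \<comment> \<open>(P1)\<close>
    (\<forall>x y z. act x (mult y z) = sum_list [mult (act x1 y) (act x2 z). (x1, x2) \<leftarrow> delta x]) \<and>
    \<comment> \<open>(P2)\<close>
    (\<forall>x y z. act x (act y z) = act (bullet mult delta act x y) z) \<and>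
    \<comment> \<open>(P3): beta : H -> End(H) linear, convolution inverse of alpha\<close>
    bilin sc sc beta \<and>
    (\<forall>x y. sum_list [act x1 (beta x2 y). (x1, x2) \<leftarrow> delta x] = sc (eps x) y) \<and>
    (\<forall>x y. sum_list [beta x1 (act x2 y). (x1, x2) \<leftarrow> delta x] = sc (eps x) y) \<and>
    \<comment> \<open>(P4)\<close>
    (\<forall>a b. eps (mult a b) = eps a * eps b) \<and> eps one = 1 \<and> teq2 sc (delta one) [(one, one)] \<and>
    \<comment> \<open>(P5)\<close>
    (\<forall>x y. teq2 sc (delta (mult x y))
        [(mult x1 (act x2 (beta x4 y1)), mult x3 y2). (x1, x2, x3, x4) \<leftarrow> delta4 delta x, (y1, y2) \<leftarrow> delta y]) \<and>
    \<comment> \<open>(P6)\<close>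
    (\<forall>x. teq2 sc (delta (Sact delta beta S x))
        [(Sact delta beta S x2, Sact delta beta S x1). (x1, x2) \<leftarrow> delta x]) \<and>
    (\<forall>x y. teq2 sc
        [(act x1 y1, lharp mult delta S act beta x2 y2). (x1, x2) \<leftarrow> delta x, (y1, y2) \<leftarrow> delta y]
        [(act x2 y2, lharp mult delta S act beta x1 y1). (x1, x2) \<leftarrow> delta x, (y1, y2) \<leftarrow> delta y])"

definition primitives :: "('k::field \<Rightarrow> 'v::ab_group_add \<Rightarrow> 'v) \<Rightarrow> 'v \<Rightarrow> ('v \<Rightarrow> ('v \<times> 'v) list) \<Rightarrow> 'v set"
  where "primitives sc one delta = {x. teq2 sc (delta x) [(x, one), (one, x)]}"

definition bilin_on :: "('k::field \<Rightarrow> 'v::ab_group_add \<Rightarrow> 'v) \<Rightarrow> 'v set \<Rightarrow> ('v \<Rightarrow> 'v \<Rightarrow> 'v) \<Rightarrow> bool"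
  where "bilin_on sc P f \<longleftrightarrow>
    (\<forall>c. \<forall>x\<in>P. \<forall>x'\<in>P. \<forall>y\<in>P. f (sc c x + x') y = sc c (f x y) + f x' y) \<and>
    (\<forall>c. \<forall>x\<in>P. \<forall>y\<in>P. \<forall>y'\<in>P. f x (sc c y + y') = sc c (f x y) + f x y')"

definition lie_algebra_on :: "('k::field \<Rightarrow> 'v::ab_group_add \<Rightarrow> 'v) \<Rightarrow> 'v set \<Rightarrow> ('v \<Rightarrow> 'v \<Rightarrow> 'v) \<Rightarrow> bool"
  where "lie_algebra_on sc P br \<longleftrightarrow>
    vector_space sc \<and> module.subspace sc P \<and>
    (\<forall>x\<in>P. \<forall>y\<in>P. br x y \<in> P) \<and> bilin_on sc P br \<and>
    (\<forall>x\<in>P. br x x = 0) \<and>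
    (\<forall>x\<in>P. \<forall>y\<in>P. \<forall>z\<in>P. br x (br y z) + br y (br z x) + br z (br x y) = 0)"

definition post_lie_on :: "('k::field \<Rightarrow> 'v::ab_group_add \<Rightarrow> 'v) \<Rightarrow> 'v set \<Rightarrow> ('v \<Rightarrow> 'v \<Rightarrow> 'v) \<Rightarrow> ('v \<Rightarrow> 'v \<Rightarrow> 'v) \<Rightarrow> bool"
  where "post_lie_on sc P br act \<longleftrightarrow>
    lie_algebra_on sc P br \<and>
    (\<forall>x\<in>P. \<forall>y\<in>P. act x y \<in> P) \<and> bilin_on sc P act \<and>
    (\<forall>x\<in>P. \<forall>y\<in>P. \<forall>z\<in>P. act x (br y z) = br (act x y) z + br y (act x z)) \<and>
    (\<forall>x\<in>P. \<forall>y\<in>P. \<forall>z\<in>P. act (br x y + act x y - act y x) z = act x (act y z) - act y (act x z))"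

end

theory Submission
  imports Defs
begin

lemma vs_field: "vector_space ((*) :: 'k::field \<Rightarrow> 'k \<Rightarrow> 'k)"
  by unfold_locales (auto simp: algebra_simps)

locale ydph =
  fixes sc :: "'k::field \<Rightarrow> 'v::ab_group_add \<Rightarrow> 'v"
    and mult :: "'v \<Rightarrow> 'v \<Rightarrow> 'v" and one :: 'v
    and delta :: "'v \<Rightarrow> ('v \<times> 'v) list" and eps :: "'v \<Rightarrow> 'k"
    and S :: "'v \<Rightarrow> 'v" and act beta :: "'v \<Rightarrow> 'v \<Rightarrow> 'v"
  assumes Y: "yd_post_hopf sc mult one delta eps S act beta"
begin

lemma VS: "vector_space sc" using Y by (simp add: yd_post_hopf_def)

definition lk :: "('v \<Rightarrow> 'k) \<Rightarrow> bool" where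
  "lk f \<longleftrightarrow> (\<forall>a b. f (a + b) = f a + f b) \<and> (\<forall>r a. f (sc r a) = r * f a)"
definition lv :: "('v \<Rightarrow> 'v) \<Rightarrow> bool" where
  "lv f \<longleftrightarrow> (\<forall>a b. f (a + b) = f a + f b) \<and> (\<forall>r a. f (sc r a) = sc r (f a))"
definition bk :: "('v \<Rightarrow> 'v \<Rightarrow> 'k) \<Rightarrow> bool" where
  "bk B \<longleftrightarrow> (\<forall>b. lk (\<lambda>a. B a b)) \<and> (\<forall>a. lk (B a))"
definition bv :: "('v \<Rightarrow> 'v \<Rightarrow> 'v) \<Rightarrow> bool" where
  "bv B \<longleftrightarrow> (\<forall>b. lv (\<lambda>a. B a b)) \<and> (\<forall>a. lv (B a))"

lemma lin_k: "lin sc (*) f \<longleftrightarrow> lk f"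
  using VS vs_field by (auto simp: lin_def Vector_Spaces.linear_iff lk_def)
lemma lin_v: "lin sc sc f \<longleftrightarrow> lv f"
  using VS by (auto simp: lin_def Vector_Spaces.linear_iff lv_def)
lemma bilin_k: "bilin sc (*) B \<longleftrightarrow> bk B"
  by (simp add: bilin_def bk_def lin_k)
lemma bilin_v: "bilin sc sc B \<longleftrightarrow> bv B"
  by (simp add: bilin_def bv_def lin_v)

lemma sc_add: "sc r (a + b) = sc r a + sc r b" using VS by (simp add: vector_space_def)
lemma sc_addl: "sc (r + s) a = sc r a + sc s a" using VS by (simp add: vector_space_def)
lemma sc_sc: "sc r (sc s a) = sc (r * s) a" using VS by (simp add: vector_space_def)
lemma sc_one: "sc 1 a = a" using VS by (simp add: vector_space_def)
lemma sc_zero: "sc 0 a = 0" proof - interpret V: vector_space sc by (rule VS) show ?thesis by simp qed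
lemma sc_zero2: "sc r 0 = 0" proof - interpret V: vector_space sc by (rule VS) show ?thesis by simp qed
lemma sc_eq0: "sc r a = 0 \<longleftrightarrow> r = 0 \<or> a = 0" proof - interpret V: vector_space sc by (rule VS) show ?thesis by simp qed

lemma lk_0: "lk f \<Longrightarrow> f 0 = 0"
  unfolding lk_def by (metis add_cancel_right_right add_0)
lemma lv_0: "lv f \<Longrightarrow> f 0 = 0"
  unfolding lv_def by (metis add_cancel_right_right add_0)
lemma lk_minus: "lk f \<Longrightarrow> f (a - b) = f a - f b"
  unfolding lk_def by (metis add_diff_cancel diff_add_cancel)
lemma lv_minus: "lv f \<Longrightarrow> f (a - b) = f a - f b"
  unfolding lv_def by (metis add_diff_cancel diff_add_cancel)

lemma lk_sum: "(\<And>p. p \<in> set L \<Longrightarrow> lk (\<lambda>a. F a p)) \<Longrightarrow> lk (\<lambda>a. sum_list (map (F a) L))"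
proof (induction L)
  case Nil then show ?case by (simp add: lk_def)
next
  case (Cons p L)
  then have "lk (\<lambda>a. F a p)" "lk (\<lambda>a. sum_list (map (F a) L))" by auto
  then show ?case unfolding lk_def by (simp add: algebra_simps)
qed

lemma lk_comp: "lk f \<Longrightarrow> lv g \<Longrightarrow> lk (\<lambda>a. f (g a))"
  unfolding lk_def lv_def by simp
lemma lv_comp: "lv f \<Longrightarrow> lv g \<Longrightarrow> lv (\<lambda>a. f (g a))"
  unfolding lv_def by simp
lemma lv_id: "lv (\<lambda>a. a)" unfolding lv_def by simp

lemma map_sum_lv: "lv f \<Longrightarrow> f (sum_list xs) = sum_list (map f xs)"
  by (induction xs) (auto simp: lv_0 lv_def)
lemma map_sum_lk: "lk f \<Longrightarrow> f (sum_list xs) = sum_list (map f xs)"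
  by (induction xs) (auto simp: lk_0 lk_def)

lemma separate: assumes "\<And>f. lk f \<Longrightarrow> f u = 0" shows "u = 0"
proof (rule ccontr)
  assume u: "u \<noteq> 0"
  interpret P: vector_space_pair sc "(*) :: 'k \<Rightarrow> 'k \<Rightarrow> 'k"
    using VS vs_field by (simp add: vector_space_pair_def)
  have "P.vs1.independent {u}"
    using u by (simp add: P.vs1.dependent_single)
  from P.linear_independent_extend[OF this, of "\<lambda>_. 1"]
  obtain g where "Vector_Spaces.linear sc (*) g" "g u = 1" by auto
  then have "lk g" using lin_k by (simp add: lin_def)
  then show False using assms[of g] \<open>g u = 1\<close> by simp
qed

lemma separate2: assumes "\<And>f. lk f \<Longrightarrow> f u = f w" shows "u = w"
proof -
  have "u - w = 0" by (rule separate) (simp add: assms lk_minus)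
  then show ?thesis by simp
qed

lemma transfer:
  assumes T: "teq2 sc L M" and B: "bv \<Phi>"
  shows "sum_list (map (\<lambda>(a,b). \<Phi> a b) L) = sum_list (map (\<lambda>(a,b). \<Phi> a b) M)"
proof (rule separate2)
  fix f assume f: "lk f"
  have "bk (\<lambda>a b. f (\<Phi> a b))" using f B unfolding bk_def bv_def
    by (auto intro: lk_comp)
  then have "sum_list (map (\<lambda>(a,b). f (\<Phi> a b)) L) = sum_list (map (\<lambda>(a,b). f (\<Phi> a b)) M)"
    using T by (simp add: teq2_def bilin_k)
  then show "f (sum_list (map (\<lambda>(a,b). \<Phi> a b) L)) = f (sum_list (map (\<lambda>(a,b). \<Phi> a b) M))"
    using f by (simp add: map_sum_lk split_def o_def)
qed


lemma sum_list_concat_map: "sum_list (map f (concat xss)) = sum_list (map (\<lambda>xs. sum_list (map f xs)) xss)"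
  by (induction xss) auto

lemma ax:
  "bv mult" "\<And>x y z. mult (mult x y) z = mult x (mult y z)"
  "\<And>x. mult one x = x" "\<And>x. mult x one = x"
  "\<And>c x y. teq2 sc (delta (sc c x + y)) (map (\<lambda>(a,b). (sc c a, b)) (delta x) @ delta y)"
  "lk eps"
  "\<And>x. sum_list [sc (eps x1) x2. (x1, x2) \<leftarrow> delta x] = x"
  "bv act"
  "\<And>x y. teq2 sc (delta (act x y)) [(act x1 y1, act x2 y2). (x1, x2) \<leftarrow> delta x, (y1, y2) \<leftarrow> delta y]"
  "\<And>x y z. act x (mult y z) = sum_list [mult (act x1 y) (act x2 z). (x1, x2) \<leftarrow> delta x]"
  "\<And>x y z. act x (act y z) = act (bullet mult delta act x y) z"
  "bv beta"
  "\<And>x y. sum_list [act x1 (beta x2 y). (x1, x2) \<leftarrow> delta x] = sc (eps x) y"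
  "eps one = 1" "teq2 sc (delta one) [(one, one)]"
  "\<And>x y. teq2 sc (delta (mult x y))
        [(mult x1 (act x2 (beta x4 y1)), mult x3 y2). (x1, x2, x3, x4) \<leftarrow> delta4 delta x, (y1, y2) \<leftarrow> delta y]"
  using Y unfolding yd_post_hopf_def bilin_v bilin_k lin_k lin_v by auto

lemma lv_multL: "lv (\<lambda>a. mult a y)" using ax(1) by (simp add: bv_def)
lemma lv_multR: "lv (mult a)" using ax(1) by (simp add: bv_def)
lemma lv_actL: "lv (\<lambda>a. act a y)" using ax(8) by (simp add: bv_def)
lemma lv_actR: "lv (act a)" using ax(8) by (simp add: bv_def)
lemma lv_betaL: "lv (\<lambda>a. beta a y)" using ax(12) by (simp add: bv_def)
lemma lv_betaR: "lv (beta a)" using ax(12) by (simp add: bv_def)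

lemma bk_comp: "bk B \<Longrightarrow> lv f \<Longrightarrow> lv g \<Longrightarrow> bk (\<lambda>a b. B (f a) (g b))"
  unfolding bk_def by (auto intro: lk_comp)
lemma bv_comp: "bv B \<Longrightarrow> lv f \<Longrightarrow> lv g \<Longrightarrow> bv (\<lambda>a b. B (f a) (g b))"
  unfolding bv_def by (auto intro: lv_comp)

lemma bk_sumI: "(\<And>p. p \<in> set L \<Longrightarrow> bk (\<lambda>a b. F a b p)) \<Longrightarrow> bk (\<lambda>a b. sum_list (map (F a b) L))"
  unfolding bk_def by (auto intro!: lk_sum)

definition P where "P = primitives sc one delta"

lemma prim_k: "x \<in> P \<Longrightarrow> bk \<Phi> \<Longrightarrow> sum_list (map (\<lambda>(a,b). \<Phi> a b) (delta x)) = \<Phi> x one + \<Phi> one x"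
  unfolding P_def primitives_def teq2_def bilin_k by auto
lemma prim_v: "x \<in> P \<Longrightarrow> bv \<Phi> \<Longrightarrow> sum_list (map (\<lambda>(a,b). \<Phi> a b) (delta x)) = \<Phi> x one + \<Phi> one x"
  unfolding P_def primitives_def using transfer[of "delta x" "[(x,one),(one,x)]" \<Phi>] by auto
lemma one_k: "bk \<Phi> \<Longrightarrow> sum_list (map (\<lambda>(a,b). \<Phi> a b) (delta one)) = \<Phi> one one"
  using ax(15) unfolding teq2_def bilin_k by auto
lemma one_v: "bv \<Phi> \<Longrightarrow> sum_list (map (\<lambda>(a,b). \<Phi> a b) (delta one)) = \<Phi> one one"
  using transfer[OF ax(15)] by auto

lemma A1: "act one (beta one y) = y"
proof -
  have "bv (\<lambda>a b. act a (beta b y))" 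
    unfolding bv_def using lv_actL lv_comp[OF lv_actR lv_betaL] by blast
  from one_v[OF this] ax(13)[where x=one and y=y] show ?thesis by (simp add: ax(14) sc_one)
qed

lemma A3: "act one (mult y z) = mult (act one y) (act one z)"
proof -
  have "bv (\<lambda>a b. mult (act a y) (act b z))"
    by (rule bv_comp[OF ax(1) lv_actL lv_actL])
  from one_v[OF this] ax(10)[where x=one and y=y and z=z] show ?thesis by simp
qed

lemma bullet_one: "bullet mult delta act one y = act one y"
proof -
  have "bv (\<lambda>a b. mult a (act b y))"
    by (rule bv_comp[OF ax(1) lv_id lv_actL])
  from one_v[OF this] show ?thesis by (simp add: bullet_def ax(3))
qed

lemma act_one: "act one y = y"
proof -
  have m: "mult (act one one) w = w" for w
  proof -
    have "mult (act one one) (act one (beta one w)) = act one (mult one (beta one w))"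
      by (simp add: A3)
    then show ?thesis by (simp add: A1 ax(3))
  qed
  have e: "act one one = one" using m[of one] ax(4) by simp
  have "act one (act one z) = act one z" for z
    using ax(11)[where x=one and y=one and z=z] by (simp add: bullet_one e)
  from this[of "beta one y"] show ?thesis by (simp add: A1)
qed

lemma beta_one: "beta one y = y" using A1[of y] by (simp add: act_one)


lemma eps_prim: assumes x: "x \<in> P" shows "eps x = 0"
proof -
  have "bv (\<lambda>a b. sc (eps a) b)"
    using ax(6) unfolding bv_def lv_def lk_def by (simp add: sc_add sc_addl sc_sc mult.commute)
  from prim_v[OF x this] ax(7)[where x=x]
  have "sc (eps x) one + sc (eps one) x = x" by simp
  then have "sc (eps x) one = 0" by (simp add: ax(14) sc_one)
  then have "eps x = 0 \<or> one = 0" by (simp add: sc_eq0)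
  then show ?thesis
  proof
    assume "one = 0"
    then have "x = 0" using ax(3)[of x] lv_0[OF lv_multL] by metis
    then show ?thesis using lk_0[OF ax(6)] by simp
  qed
qed

lemma act_prim_one: assumes x: "x \<in> P" shows "act x one = 0"
proof -
  have "bv (\<lambda>a b. mult (act a one) (act b one))"
    by (rule bv_comp[OF ax(1) lv_actL lv_actL])
  have "act x one = (\<Sum>(a,b)\<leftarrow>delta x. mult (act a one) (act b one))"
    using ax(10)[where x=x and y=one and z=one] by (simp add: ax(3))
  also have "\<dots> = mult (act x one) (act one one) + mult (act one one) (act x one)"
    by (rule prim_v[OF x \<open>bv _\<close>])
  finally have "act x one = act x one + act x one" by (simp add: ax(3) ax(4) act_one)
  then show ?thesis by simp
qed

lemma beta_prim: assumes x: "x \<in> P" shows "beta x y = - act x y"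
proof -
  have "bv (\<lambda>a b. act a (beta b y))" 
    unfolding bv_def using lv_actL lv_comp[OF lv_actR lv_betaL] by blast
  from prim_v[OF x this] ax(13)[where x=x and y=y]
  have "act x y + beta x y = 0" by (simp add: eps_prim[OF x] sc_zero act_one beta_one)
  then show ?thesis by (metis add.commute eq_neg_iff_add_eq_0)
qed

lemma bullet_prim: assumes x: "x \<in> P" shows "bullet mult delta act x y = mult x y + act x y"
proof -
  have "bv (\<lambda>a b. mult a (act b y))"
    by (rule bv_comp[OF ax(1) lv_id lv_actL])
  from prim_v[OF x this] show ?thesis by (simp add: bullet_def ax(3) act_one)
qed

lemma P_iff: "x \<in> P \<longleftrightarrow> (\<forall>B. bk B \<longrightarrow> sum_list (map (\<lambda>(a,b). B a b) (delta x)) = B x one + B one x)"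
  unfolding P_def primitives_def teq2_def bilin_k by auto

lemma R1: assumes x: "x \<in> P" and y: "y \<in> P" shows "act x y \<in> P"
  unfolding P_iff
proof (intro allI impI)
  fix B assume B: "bk B"
  have "sum_list (map (\<lambda>(a,b). B a b) (delta (act x y)))
     = sum_list (map (\<lambda>(a,b). B a b) [(act x1 y1, act x2 y2). (x1, x2) \<leftarrow> delta x, (y1, y2) \<leftarrow> delta y])"
    using ax(9)[where x=x and y=y] B unfolding teq2_def bilin_k by blast
  also have "\<dots> = (\<Sum>(x1,x2)\<leftarrow>delta x. \<Sum>(y1,y2)\<leftarrow>delta y. B (act x1 y1) (act x2 y2))"
    by (simp add: sum_list_concat_map o_def split_def)
  also have "\<dots> = B (act x y) one + B one (act x y)"
  proof -
    have inner: "(\<Sum>(y1,y2)\<leftarrow>delta y. B (act a y1) (act b y2)) = B (act a y) (act b one) + B (act a one) (act b y)" for a b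
      using prim_k[OF y bk_comp[OF B lv_actR lv_actR]] by simp
    have "bk (\<lambda>a b. \<Sum>(y1,y2)\<leftarrow>delta y. B (act a y1) (act b y2))"
    proof (rule bk_sumI)
      fix p assume "p \<in> set (delta y)"
      show "bk (\<lambda>a b. case p of (y1, y2) \<Rightarrow> B (act a y1) (act b y2))"
        by (cases p) (simp add: bk_comp[OF B lv_actL lv_actL])
    qed
    then have "(\<Sum>(x1,x2)\<leftarrow>delta x. \<Sum>(y1,y2)\<leftarrow>delta y. B (act x1 y1) (act x2 y2))
       = (\<Sum>(y1,y2)\<leftarrow>delta y. B (act x y1) (act one y2)) + (\<Sum>(y1,y2)\<leftarrow>delta y. B (act one y1) (act x y2))"
      by (rule prim_k[OF x])
    also have "\<dots> = B (act x y) (act one one) + B (act x one) (act one y) + (B (act one y) (act x one) + B (act one one) (act x y))"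
      by (simp only: inner)
    moreover have "B 0 y = 0" "B y 0 = 0" using B lk_0 unfolding bk_def by auto
    ultimately show ?thesis
      by (simp add: act_one act_prim_one[OF x])
  qed
  finally show "sum_list (map (\<lambda>(a,b). B a b) (delta (act x y))) = B (act x y) one + B one (act x y)" .
qed


lemma sum_scl: assumes "bk \<Phi>"
  shows "(\<Sum>(a,b)\<leftarrow>map (\<lambda>(a,b). (sc c a, b)) L. \<Phi> a b) = c * (\<Sum>(a,b)\<leftarrow>L. \<Phi> a b)"
  using assms by (induction L) (auto simp: bk_def lk_def algebra_simps)

lemma Dsum: assumes "bk \<Phi>"
  shows "(\<Sum>(a,b)\<leftarrow>delta (sc c x + y). \<Phi> a b) = c * (\<Sum>(a,b)\<leftarrow>delta x. \<Phi> a b) + (\<Sum>(a,b)\<leftarrow>delta y. \<Phi> a b)"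
proof -
  have "(\<Sum>(a,b)\<leftarrow>delta (sc c x + y). \<Phi> a b) = (\<Sum>(a,b)\<leftarrow>map (\<lambda>(a,b). (sc c a, b)) (delta x) @ delta y. \<Phi> a b)"
    using ax(5)[where c=c and x=x and y=y] assms unfolding teq2_def bilin_k by blast
  also have "\<dots> = (\<Sum>(a,b)\<leftarrow>map (\<lambda>(a,b). (sc c a, b)) (delta x). \<Phi> a b) + (\<Sum>(a,b)\<leftarrow>delta y. \<Phi> a b)"
    by (simp only: map_append sum_list_append)
  finally show ?thesis by (simp only: sum_scl[OF assms])
qed

lemma D0: assumes "bk \<Phi>" shows "(\<Sum>(a,b)\<leftarrow>delta 0. \<Phi> a b) = 0"
  using Dsum[OF assms, where c="-1" and x=0 and y=0] by (simp add: sc_zero2)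

lemma Dlin: assumes "bk \<Phi>" shows "lk (\<lambda>x. \<Sum>(a,b)\<leftarrow>delta x. \<Phi> a b)"
  unfolding lk_def
proof (intro conjI allI)
  fix a b show "(\<Sum>(p,q)\<leftarrow>delta (a + b). \<Phi> p q) = (\<Sum>(p,q)\<leftarrow>delta a. \<Phi> p q) + (\<Sum>(p,q)\<leftarrow>delta b. \<Phi> p q)"
    using Dsum[OF assms, where c=1 and x=a and y=b] by (simp add: sc_one)
next
  fix r a show "(\<Sum>(p,q)\<leftarrow>delta (sc r a). \<Phi> p q) = r * (\<Sum>(p,q)\<leftarrow>delta a. \<Phi> p q)"
    using Dsum[OF assms, where c=r and x=a and y=0] by (simp add: D0[OF assms])
qed

lemma zero_P: "0 \<in> P"
  unfolding P_iff
proof (intro allI impI)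
  fix B assume B: "bk B"
  then have "B 0 one = 0" "B one 0 = 0" using lk_0 unfolding bk_def by auto
  then show "(\<Sum>(a,b)\<leftarrow>delta 0. B a b) = B 0 one + B one 0" using D0[OF B] by simp
qed

lemma lin_P: assumes "x \<in> P" "y \<in> P" shows "sc c x + y \<in> P"
  unfolding P_iff
proof (intro allI impI)
  fix B assume B: "bk B"
  then have l1: "lk (\<lambda>a. B a one)" and l2: "lk (B one)" by (auto simp: bk_def)
  show "(\<Sum>(a,b)\<leftarrow>delta (sc c x + y). B a b) = B (sc c x + y) one + B one (sc c x + y)"
    using Dsum[OF B] prim_k[OF assms(1) B] prim_k[OF assms(2) B] l1 l2
    by (simp add: lk_def algebra_simps)
qed

lemma subspace_P: "module.subspace sc P"
proof -
  interpret V: vector_space sc by (rule VS)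
  show ?thesis unfolding V.subspace_def
    using zero_P lin_P[where c=1] lin_P[where y=0] by (auto simp: sc_one)
qed

lemma delta4_prim:
  assumes x: "x \<in> P"
    and F1: "\<And>b c d. lk (\<lambda>a. F a b c d)" and F2: "\<And>a c d. lk (\<lambda>b. F a b c d)"
    and F3: "\<And>a b d. lk (\<lambda>c. F a b c d)" and F4: "\<And>a b c. lk (\<lambda>d. F a b c d)"
  shows "(\<Sum>(a1,a2,a3,a4)\<leftarrow>delta4 delta x. F a1 a2 a3 a4)
       = F x one one one + F one x one one + F one one x one + F one one one x"
proof -
  define H where "H c a3 b = (\<Sum>(a1,a2)\<leftarrow>delta c. F a1 a2 a3 b)" for c a3 b
  define G where "G a b = (\<Sum>(c,a3)\<leftarrow>delta a. H c a3 b)" for a b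
  have bF: "bk (\<lambda>a1 a2. F a1 a2 a3 b)" for a3 b using F1 F2 by (simp add: bk_def)
  have bH: "bk (\<lambda>c a3. H c a3 b)" for b
    unfolding bk_def H_def
  proof (intro conjI allI)
    fix a3 show "lk (\<lambda>c. \<Sum>(a1,a2)\<leftarrow>delta c. F a1 a2 a3 b)" by (rule Dlin[OF bF])
  next
    fix c show "lk (\<lambda>a3. \<Sum>(a1,a2)\<leftarrow>delta c. F a1 a2 a3 b)"
      by (rule lk_sum) (auto simp: split_def F3)
  qed
  have lHb: "lk (\<lambda>b. H c a3 b)" for c a3
    unfolding H_def by (rule lk_sum) (auto simp: split_def F4)
  have bG: "bk G" unfolding bk_def G_def
  proof (intro conjI allI)
    fix b show "lk (\<lambda>a. \<Sum>(c,a3)\<leftarrow>delta a. H c a3 b)" by (rule Dlin[OF bH])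
  next
    fix a show "lk (\<lambda>b. \<Sum>(c,a3)\<leftarrow>delta a. H c a3 b)"
      by (rule lk_sum) (auto simp: split_def lHb)
  qed
  have H1: "H one a3 b = F one one a3 b" for a3 b unfolding H_def by (rule one_k[OF bF])
  have Hx: "H x one b = F x one one b + F one x one b" for b unfolding H_def by (rule prim_k[OF x bF])
  have G1: "G one b = H one one b" for b unfolding G_def by (rule one_k[OF bH])
  have Gx: "G x b = H x one b + H one x b" for b unfolding G_def by (rule prim_k[OF x bH])
  have "(\<Sum>(a1,a2,a3,a4)\<leftarrow>delta4 delta x. F a1 a2 a3 a4) = (\<Sum>(a,b)\<leftarrow>delta x. G a b)"
    unfolding delta4_def G_def H_def by (simp add: sum_list_concat_map o_def split_def)
  also have "\<dots> = G x one + G one x" by (rule prim_k[OF x bG])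
  finally show ?thesis by (simp add: Gx G1 H1 Hx add.assoc)
qed


lemma R_mult: assumes x: "x \<in> P" and y: "y \<in> P" and B: "bk B"
  shows "(\<Sum>(a,b)\<leftarrow>delta (mult x y). B a b) = B (mult x y) one + B one (mult x y) + B x y + B y x"
proof -
  have lB1: "lk (\<lambda>u. B u w)" and lB2: "lk (B u)" for u w using B by (auto simp: bk_def)
  have B0: "B 0 w = 0" "B w 0 = 0" for w using lk_0[OF lB1] lk_0[OF lB2] by auto
  have Bn: "B (- u) w = - B u w" for u w using lk_minus[OF lB1, of 0 u] by (simp add: B0)
  define F where "F a1 a2 a3 a4 = (\<Sum>(y1,y2)\<leftarrow>delta y. B (mult a1 (act a2 (beta a4 y1))) (mult a3 y2))"
    for a1 a2 a3 a4
  have F1: "lk (\<lambda>a. F a b c d)" for b c d unfolding F_def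
    by (rule lk_sum) (simp add: split_def lk_comp[OF lB1 lv_multL])
  have F2: "lk (\<lambda>b. F a b c d)" for a c d unfolding F_def
    by (rule lk_sum) (simp add: split_def lk_comp[OF lB1 lv_comp[OF lv_multR lv_actL]])
  have F3: "lk (\<lambda>c. F a b c d)" for a b d unfolding F_def
    by (rule lk_sum) (simp add: split_def lk_comp[OF lB2 lv_multL])
  have F4: "lk (\<lambda>d. F a b c d)" for a b c unfolding F_def
    by (rule lk_sum) (simp add: split_def lk_comp[OF lB1 lv_comp[OF lv_multR lv_comp[OF lv_actR lv_betaL]]])
  have Fv: "F a1 a2 a3 a4 = B (mult a1 (act a2 (beta a4 y))) (mult a3 one) + B (mult a1 (act a2 (beta a4 one))) (mult a3 y)"
    for a1 a2 a3 a4 unfolding F_def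
    by (rule prim_k[OF y bk_comp[OF B lv_comp[OF lv_multR lv_comp[OF lv_actR lv_betaR]] lv_multR]])
  have "(\<Sum>(a,b)\<leftarrow>delta (mult x y). B a b) =
     (\<Sum>(a,b)\<leftarrow>[(mult x1 (act x2 (beta x4 y1)), mult x3 y2). (x1, x2, x3, x4) \<leftarrow> delta4 delta x, (y1, y2) \<leftarrow> delta y]. B a b)"
    using ax(16)[where x=x and y=y] B unfolding teq2_def bilin_k by blast
  also have "\<dots> = (\<Sum>(a1,a2,a3,a4)\<leftarrow>delta4 delta x. F a1 a2 a3 a4)"
    unfolding F_def by (simp add: sum_list_concat_map o_def split_def)
  also have "\<dots> = F x one one one + F one x one one + F one one x one + F one one one x"
    by (rule delta4_prim[OF x F1 F2 F3 F4])
  finally show ?thesis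
    by (simp add: Fv act_one beta_one beta_prim[OF x] act_prim_one[OF x] ax(3) ax(4) Bn B0
        lv_0[OF lv_multR] lv_0[OF lv_multL] lv_0[OF lv_actR] algebra_simps)
qed


lemma lv_simps:
  assumes "lv f" shows "f (a + b) = f a + f b" "f (a - b) = f a - f b" "f (sc r a) = sc r (f a)" "f 0 = 0"
  using assms lv_minus lv_0 by (auto simp: lv_def)

lemmas mL = lv_simps[OF lv_multL] and mR = lv_simps[OF lv_multR]
   and aL = lv_simps[OF lv_actL] and aR = lv_simps[OF lv_actR]

lemma R3: assumes x: "x \<in> P" and y: "y \<in> P" shows "mult x y - mult y x \<in> P"
  unfolding P_iff
proof (intro allI impI)
  fix B assume B: "bk B"
  have lB1: "lk (\<lambda>u. B u w)" and lB2: "lk (B u)" for u w using B by (auto simp: bk_def)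
  have "(\<Sum>(a,b)\<leftarrow>delta (mult x y - mult y x). B a b)
      = (\<Sum>(a,b)\<leftarrow>delta (mult x y). B a b) - (\<Sum>(a,b)\<leftarrow>delta (mult y x). B a b)"
    by (rule lk_minus[OF Dlin[OF B]])
  also have "\<dots> = B (mult x y - mult y x) one + B one (mult x y - mult y x)"
    using R_mult[OF x y B] R_mult[OF y x B] lk_minus[OF lB1] lk_minus[OF lB2] by simp
  finally show "(\<Sum>(a,b)\<leftarrow>delta (mult x y - mult y x). B a b) = B (mult x y - mult y x) one + B one (mult x y - mult y x)" .
qed

lemma act_mult_prim: assumes x: "x \<in> P"
  shows "act x (mult y z) = mult (act x y) z + mult y (act x z)"
proof -
  have "act x (mult y z) = (\<Sum>(a,b)\<leftarrow>delta x. mult (act a y) (act b z))"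
    using ax(10)[where x=x and y=y and z=z] by simp
  also have "\<dots> = mult (act x y) (act one z) + mult (act one y) (act x z)"
    by (rule prim_v[OF x bv_comp[OF ax(1) lv_actL lv_actL]])
  finally show ?thesis by (simp add: act_one)
qed

lemma sc_diff: "sc c (a - b) = sc c a - sc c b"
  using lv_minus[of "sc c"] sc_add sc_sc by (simp add: lv_def mult.commute)

lemma final:
  "(\<forall>x\<in>primitives sc one delta. \<forall>y\<in>primitives sc one delta. act x y \<in> primitives sc one delta)
       \<and> bilin_on sc (primitives sc one delta) act
       \<and> post_lie_on sc (primitives sc one delta) (\<lambda>x y. mult x y - mult y x) act"
proof -
  have BA: "bilin_on sc P act"
    unfolding bilin_on_def by (simp add: aL aR)
  have BM: "bilin_on sc P (\<lambda>x y. mult x y - mult y x)"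
    unfolding bilin_on_def by (simp add: mL mR sc_diff sc_add algebra_simps)
  have jac: "mult x (mult y z - mult z y) - mult (mult y z - mult z y) x +
          (mult y (mult z x - mult x z) - mult (mult z x - mult x z) y) +
          (mult z (mult x y - mult y x) - mult (mult x y - mult y x) z) = 0" for x y z
    by (simp add: mL mR ax(2))
  show ?thesis
    unfolding post_lie_on_def lie_algebra_on_def P_def[symmetric]
    using R1 R3 BA BM subspace_P VS jac
    by (auto simp: act_mult_prim aL aR ax(11) bullet_prim)
qed

end

theorem mainTheorem4:
  fixes sc :: "'k::field \<Rightarrow> 'v::ab_group_add \<Rightarrow> 'v"
    and mult :: "'v \<Rightarrow> 'v \<Rightarrow> 'v" and one :: 'v
    and delta :: "'v \<Rightarrow> ('v \<times> 'v) list" and eps :: "'v \<Rightarrow> 'k"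
    and S :: "'v \<Rightarrow> 'v" and act beta :: "'v \<Rightarrow> 'v \<Rightarrow> 'v"
  assumes "yd_post_hopf sc mult one delta eps S act beta"
  shows "(\<forall>x\<in>primitives sc one delta. \<forall>y\<in>primitives sc one delta. act x y \<in> primitives sc one delta)
       \<and> bilin_on sc (primitives sc one delta) act
       \<and> post_lie_on sc (primitives sc one delta) (\<lambda>x y. mult x y - mult y x) act"
proof -
  interpret ydph sc mult one delta eps S act beta by (rule ydph.intro[OF assms])
  show ?thesis by (rule final)
qed

end
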